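(* Let $(z,z')$ be admissible and $t=zz'$. For every $\zeta\in\mathbb C$, $$\int_{-1}^1\Phi(t+1;\zeta x)\,\sigma^{(zz')}_1(dx)=\Phi(z+1;\zeta)\,\Phi(-z'+1;-\zeta)=\Phi(z'+1;\zeta)\,\Phi(-z+1;-\zeta),$$ where $\Phi(a;\zeta)={}_1F_1(a;2;\zeta)=\sum_{k\ge0}\frac{(a)_k}{(k+1)!\,k!}\zeta^k$.
   Context: $\sigma^{(zz')}_1$ is the first controlling measure of the spectral $z$-measure $P_{zz'}$; equivalently (and this characterizes it) it is the unique measure on $[-1,1]$ with moments $\int x^l\sigma^{(zz')}_1(dx)=\sum_{p+q=l,\ p,q\ge0}\frac{(-1)^q\,t\,(z+1)_p(-z+1)_q(z'+1)_p(-z'+1)_q}{(t)_{p+q+1}(p+q+1)p!q!}$ for $l=0,1,2,\dots$. Admissible parameters: either $z'=\bar z$, $z\notin\mathbb Z$, or $z,z'$ real in a common interval $(m,m+1)$, $m\in\mathbb Z$. $(a)_n=a(a+1)\cdots(a+n-1)$. *)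

theory Defs
  imports "HOL-Analysis.Analysis"
begin

definition Phi :: "complex \<Rightarrow> complex \<Rightarrow> complex" where
  "Phi a \<zeta> = (\<Sum>k. pochhammer a k / (of_nat (fact (k+1)) * of_nat (fact k)) * \<zeta> ^ k)"

definition admissible :: "complex \<Rightarrow> complex \<Rightarrow> bool" where
  "admissible z z' \<longleftrightarrow>
     (z' = cnj z \<and> z \<notin> \<int>) \<or>
     (z \<in> \<real> \<and> z' \<in> \<real> \<and>
      (\<exists>m::int. of_int m < Re z \<and> Re z < of_int m + 1 \<and>
                 of_int m < Re z' \<and> Re z' < of_int m + 1))"

definition sigma1_moment :: "complex \<Rightarrow> complex \<Rightarrow> nat \<Rightarrow> complex" where
  "sigma1_moment z z' l =
     (let t = z * z' in
      \<Sum>p\<le>l. let q = l - p in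
        (-1) ^ q * t * pochhammer (z + 1) p * pochhammer (- z + 1) q
          * pochhammer (z' + 1) p * pochhammer (- z' + 1) q
        / (pochhammer t (p + q + 1) * of_nat (p + q + 1) * of_nat (fact p) * of_nat (fact q)))"

text \<open>M is (the) first controlling measure sigma_1^{(z z')}: a finite Borel measure on the
  reals concentrated on [-1,1] with the prescribed moments (which characterize it uniquely).\<close>
definition is_sigma1 :: "complex \<Rightarrow> complex \<Rightarrow> real measure \<Rightarrow> bool" where
  "is_sigma1 z z' M \<longleftrightarrow>
     sets M = sets borel \<and> finite_measure M \<and> emeasure M (- {-1..1}) = 0 \<and>
     (\<forall>l. complex_of_real (integral\<^sup>L M (\<lambda>x. x ^ l)) = sigma1_moment z z' l)"

end

theory Submission
  imports Defs
begin


lemma sum_rev_atMost: "(\<Sum>i\<le>(l::nat). g i) = (\<Sum>i\<le>l. g (l - i))"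
  by (rule sum.reindex_bij_witness[where i="\<lambda>i. l - i" and j="\<lambda>i. l - i"]) auto

lemma binom_split:
  fixes g :: "nat \<Rightarrow> 'a::comm_ring_1"
  shows "(\<Sum>j\<le>Suc n. of_nat (Suc n choose j) * g j)
       = (\<Sum>j\<le>n. of_nat (n choose j) * g j) + (\<Sum>j\<le>n. of_nat (n choose j) * g (Suc j))"
proof -
  have "(\<Sum>j\<le>Suc n. of_nat (Suc n choose j) * g j)
      = g 0 + (\<Sum>j\<le>n. of_nat (Suc n choose Suc j) * g (Suc j))"
    by (subst sum.atMost_Suc_shift) simp
  also have "\<dots> = g 0 + (\<Sum>j\<le>n. of_nat (n choose Suc j) * g (Suc j)) + (\<Sum>j\<le>n. of_nat (n choose j) * g (Suc j))"
    by (simp add: sum.distrib algebra_simps)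
  also have "g 0 + (\<Sum>j\<le>n. of_nat (n choose Suc j) * g (Suc j)) = (\<Sum>j\<le>Suc n. of_nat (n choose j) * g j)"
    by (subst sum.atMost_Suc_shift) simp
  also have "\<dots> = (\<Sum>j\<le>n. of_nat (n choose j) * g j)"
    by (simp add: binomial_eq_0)
  finally show ?thesis .
qed

definition pascal :: "(nat \<Rightarrow> nat \<Rightarrow> 'a::comm_ring_1) \<Rightarrow> bool" where
  "pascal F \<longleftrightarrow> (\<forall>q p. F q p = F (Suc q) p + F q (Suc p))"

lemma pascal_a:
  fixes F :: "nat \<Rightarrow> nat \<Rightarrow> 'a::comm_ring_1"
  assumes "pascal F"
  shows "F q p = (\<Sum>j\<le>p. of_nat (p choose j) * ((-1)^j * F (q+j) 0))"
proof (induction p arbitrary: q)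
  case 0
  then show ?case by simp
next
  case (Suc p)
  have P: "F q (Suc p) = F q p - F (Suc q) p"
    using assms unfolding pascal_def by (metis add_diff_cancel_left')
  show ?case
    unfolding binom_split P Suc.IH[of q] Suc.IH[of "Suc q"]
    by (simp add: sum_negf[symmetric])
qed

lemma pascal_b:
  fixes F :: "nat \<Rightarrow> nat \<Rightarrow> 'a::comm_ring_1"
  assumes "pascal F"
  shows "(\<Sum>q\<le>n. of_nat (n choose q) * F q (P + n - q)) = F 0 P"
proof (induction n)
  case 0
  then show ?case by simp
next
  case (Suc n)
  have "(\<Sum>q\<le>Suc n. of_nat (Suc n choose q) * F q (P + Suc n - q))
     = (\<Sum>q\<le>n. of_nat (n choose q) * F q (P + Suc n - q)) + (\<Sum>q\<le>n. of_nat (n choose q) * F (Suc q) (P + Suc n - Suc q))"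
    by (rule binom_split)
  also have "\<dots> = (\<Sum>q\<le>n. of_nat (n choose q) * (F q (Suc (P + n - q)) + F (Suc q) (P + n - q)))"
    unfolding distrib_left sum.distrib
  proof (intro arg_cong2[where f="(+)"] sum.cong refl)
    fix q assume "q \<in> {..n}"
    then have "P + Suc n - q = Suc (P + n - q)" by auto
    then show "of_nat (n choose q) * F q (P + Suc n - q) = of_nat (n choose q) * F q (Suc (P + n - q))"
      by simp
  qed simp
  also have "\<dots> = (\<Sum>q\<le>n. of_nat (n choose q) * F q (P + n - q))"
  proof -
    have PF: "\<And>q p. F q (Suc p) + F (Suc q) p = F q p"
      using assms unfolding pascal_def by (metis add.commute)
    show ?thesis by (simp only: PF)
  qed
  finally show ?case using Suc.IH by simp
qed

lemma pascal_main:
  fixes F1 F2 :: "nat \<Rightarrow> nat \<Rightarrow> 'a::comm_ring_1"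
  assumes "pascal F1" "pascal F2"
  shows "(\<Sum>p\<le>l. of_nat (l choose p) * (-1)^(l-p) * F1 (l-p) p * F2 (l-p) p)
       = (\<Sum>p\<le>l. of_nat (l choose p) * (-1)^(l-p) * F1 0 p * F2 (l-p) 0)"
proof -
  define h where "h q k = of_nat (l choose q) * of_nat ((l-q) choose k) * (-1)^(q+k) * F1 q (l-q) * F2 (q+k) 0" for q k
  have "(\<Sum>p\<le>l. of_nat (l choose p) * (-1)^(l-p) * F1 (l-p) p * F2 (l-p) p)
      = (\<Sum>q\<le>l. of_nat (l choose q) * (-1)^q * F1 q (l-q) * F2 q (l-q))"
    by (subst sum_rev_atMost) (intro sum.cong, auto simp: binomial_symmetric[symmetric])
  also have "\<dots> = (\<Sum>q\<le>l. \<Sum>k\<le>l-q. h q k)"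
    unfolding h_def pascal_a[OF assms(2), of _ "l - _"]
    by (simp add: sum_distrib_left power_add mult_ac)
  also have "\<dots> = (\<Sum>(q,k)\<in>{(q,k). q+k \<le> l}. h q k)"
    by (subst sum.Sigma) (auto intro!: sum.cong)
  also have "\<dots> = (\<Sum>n\<le>l. \<Sum>q\<le>n. h q (n - q))"
    by (rule sum.triangle_reindex_eq)
  also have "\<dots> = (\<Sum>n\<le>l. of_nat (l choose n) * (-1)^n * F2 n 0 * (\<Sum>q\<le>n. of_nat (n choose q) * F1 q ((l - n) + n - q)))"
  proof (intro sum.cong refl)
    fix n assume n: "n \<in> {..l}"
    show "(\<Sum>q\<le>n. h q (n - q)) = of_nat (l choose n) * (-1)^n * F2 n 0 * (\<Sum>q\<le>n. of_nat (n choose q) * F1 q ((l - n) + n - q))"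
      unfolding sum_distrib_left
    proof (intro sum.cong refl)
      fix q assume q: "q \<in> {..n}"
      have c: "(l choose n) * (n choose q) = (l choose q) * ((l - q) choose (n - q))"
        using n q by (intro choose_mult) auto
      have c': "of_nat (l choose q) * of_nat ((l - q) choose (n - q)) = (of_nat (l choose n) * of_nat (n choose q) :: 'a)"
        by (metis c of_nat_mult)
      have e1: "h q (n - q) = (of_nat (l choose q) * of_nat ((l-q) choose (n-q))) * ((-1)^n * F1 q (l-q) * F2 n 0)"
        using n q unfolding h_def by (simp add: mult_ac)
      have e2: "(l - n) + n - q = l - q" using n q by auto
      show "h q (n - q) = of_nat (l choose n) * (-1)^n * F2 n 0 * (of_nat (n choose q) * F1 q ((l - n) + n - q))"
        unfolding e1 c' e2 by (simp add: mult_ac)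
    qed
  qed
  also have "\<dots> = (\<Sum>n\<le>l. of_nat (l choose n) * (-1)^n * F2 n 0 * F1 0 (l - n))"
    by (intro sum.cong refl, subst pascal_b[OF assms(1)], rule refl)
  also have "\<dots> = (\<Sum>p\<le>l. of_nat (l choose p) * (-1)^(l-p) * F1 0 p * F2 (l-p) 0)"
    by (subst sum_rev_atMost) (intro sum.cong, auto simp: binomial_symmetric[symmetric] mult_ac)
  finally show ?thesis .
qed



definition Fz :: "complex \<Rightarrow> nat \<Rightarrow> nat \<Rightarrow> complex" where
  "Fz z q p = pochhammer (- z + 1) q * pochhammer (z + 1) p / of_nat (fact (p + q + 1))"

lemma pascal_Fz: "pascal (Fz z)"
  unfolding pascal_def
proof (intro allI)
  fix q p
  define D where "D = (of_nat (fact (p + q + 1)) :: complex)"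
  have f1: "of_nat (fact (p + Suc q + 1)) = D * of_nat (p + q + 2)"
    unfolding D_def by (simp add: algebra_simps)
  have f2: "of_nat (fact (Suc p + q + 1)) = D * of_nat (p + q + 2)"
    unfolding D_def by (simp add: algebra_simps)
  have nz: "D \<noteq> 0" unfolding D_def by (simp only: of_nat_eq_0_iff fact_nonzero not_False_eq_True)
  have nz2: "(of_nat (p + q + 2) :: complex) \<noteq> 0" by (simp only: of_nat_eq_0_iff)
  have key: "A * B / D = A * (- z + 1 + of_nat q) * B / (D * of_nat (p + q + 2))
                + A * (B * (z + 1 + of_nat p)) / (D * of_nat (p + q + 2))" for A B
  proof -
    have "A * (- z + 1 + of_nat q) * B + A * (B * (z + 1 + of_nat p)) = A * B * of_nat (p + q + 2)"
      by (simp add: algebra_simps)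
    then show ?thesis using nz nz2 by (simp add: add_divide_distrib[symmetric])
  qed
  show "Fz z q p = Fz z (Suc q) p + Fz z q (Suc p)"
    unfolding Fz_def f1 f2 pochhammer_Suc D_def[symmetric] by (rule key)
qed

definition phi_term :: "complex \<Rightarrow> nat \<Rightarrow> complex \<Rightarrow> complex" where
  "phi_term a k \<zeta> = pochhammer a k / (of_nat (fact (k+1)) * of_nat (fact k)) * \<zeta> ^ k"

lemma Phi_eq: "Phi a \<zeta> = (\<Sum>k. phi_term a k \<zeta>)"
  unfolding Phi_def phi_term_def ..

lemma phi_term_Suc:
  "phi_term a (Suc k) \<zeta> = phi_term a k \<zeta> * ((a + of_nat k) * \<zeta> / (of_nat (k+2) * of_nat (k+1)))"
proof -
  have e1: "(of_nat (fact (Suc k + 1)) :: complex) = of_nat (fact (k+1)) * of_nat (k+2)"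
    by (simp add: algebra_simps)
  have e2: "(of_nat (fact (Suc k)) :: complex) = of_nat (fact k) * of_nat (k+1)"
    by (simp add: algebra_simps)
  have nz: "(of_nat (fact (k + 1)) :: complex) \<noteq> 0" "(of_nat (fact k) :: complex) \<noteq> 0"
    "(of_nat (k+2) :: complex) \<noteq> 0" "(of_nat (k+1) :: complex) \<noteq> 0"
    by (simp_all only: of_nat_eq_0_iff) simp_all
  show ?thesis
    unfolding phi_term_def e1 e2 pochhammer_Suc using nz
    by (simp add: field_simps)
qed

lemma phi_summable: "summable (\<lambda>k. norm (phi_term a k \<zeta>))"
proof (rule summable_ratio_test[where c="1/2" and N="nat \<lceil>2 * (norm a + 1) * norm \<zeta>\<rceil> + 1"])
  fix k assume k: "nat \<lceil>2 * (norm a + 1) * norm \<zeta>\<rceil> + 1 \<le> k"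
  define A where "A = norm a" 
  define Z where "Z = norm \<zeta>"
  have A0: "A \<ge> 0" "Z \<ge> 0" unfolding A_def Z_def by auto
  have k1: "real k \<ge> 1" using k by simp
  have kN: "2 * (A + 1) * Z \<le> real k - 1"
    using k unfolding A_def Z_def by linarith
  have n1: "norm (a + of_nat k) \<le> A + real k"
    unfolding A_def by (metis norm_of_nat norm_triangle_ineq)
  have b1: "(A + real k) * Z * 2 \<le> (real k + 2) * (real k + 1)"
  proof -
    have h1: "0 \<le> A * (real k - 1)" using A0 k1 by simp
    have h2: "(A + 1) * real k - (A + real k) = A * (real k - 1)" by (simp add: algebra_simps)
    have a: "(A + real k) \<le> (A + 1) * real k" using h1 h2 by linarith
    have "(A + real k) * (2 * Z) \<le> (A + 1) * real k * (2 * Z)"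
      using a A0 by (intro mult_right_mono) auto
    then have "(A + real k) * Z * 2 \<le> (2 * (A + 1) * Z) * real k"
      by (simp add: algebra_simps)
    also have "\<dots> \<le> (real k - 1) * real k" using kN k1 by (intro mult_right_mono) auto
    also have "\<dots> \<le> (real k + 2) * (real k + 1)"
    proof -
      have "(real k + 2) * (real k + 1) - (real k - 1) * real k = 4 * real k + 2"
        by (simp add: algebra_simps)
      then show ?thesis using k1 by linarith
    qed
    finally show ?thesis .
  qed
  have "norm ((a + of_nat k) * \<zeta> / (of_nat (k+2) * of_nat (k+1))) = norm (a + of_nat k) * Z / ((real k + 2) * (real k + 1))"
  proof -
    have "norm (of_nat (k+2) * of_nat (k+1) :: complex) = (real k + 2) * (real k + 1)"
      by (simp only: norm_mult norm_of_nat) (simp add: algebra_simps)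
    then show ?thesis unfolding Z_def by (simp only: norm_mult norm_divide)
  qed
  also have "\<dots> \<le> (A + real k) * Z / ((real k + 2) * (real k + 1))"
    using n1 A0 by (intro divide_right_mono mult_right_mono) auto
  also have "\<dots> \<le> 1/2"
    using b1 by (simp add: divide_simps)
  finally have r: "norm ((a + of_nat k) * \<zeta> / (of_nat (k+2) * of_nat (k+1))) \<le> 1/2" .
  have e: "norm (phi_term a (Suc k) \<zeta>) = norm (phi_term a k \<zeta>) * norm ((a + of_nat k) * \<zeta> / (of_nat (k+2) * of_nat (k+1)))"
    unfolding phi_term_Suc[of a k] norm_mult ..
  have "norm (phi_term a k \<zeta>) * norm ((a + of_nat k) * \<zeta> / (of_nat (k+2) * of_nat (k+1))) \<le> norm (phi_term a k \<zeta>) * (1/2)"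
    using r by (intro mult_left_mono) auto
  then show "norm (norm (phi_term a (Suc k) \<zeta>)) \<le> 1 / 2 * norm (norm (phi_term a k \<zeta>))"
    unfolding real_norm_def abs_norm_cancel e by (simp add: mult.commute)
qed simp

definition Sc :: "complex \<Rightarrow> complex \<Rightarrow> nat \<Rightarrow> complex" where
  "Sc z w l = (\<Sum>p\<le>l. of_nat (l choose p) * (-1)^(l-p) * Fz z (l-p) p * Fz w (l-p) p)"

lemma Sc_sym: "Sc z w l = Sc w z l"
  unfolding Sc_def by (simp add: mult_ac)

lemma aux2:
  fixes F fp fq P1 Q1 a b x :: complex
  assumes "F \<noteq> 0" "fp \<noteq> 0" "fq \<noteq> 0" "P1 \<noteq> 0" "Q1 \<noteq> 0"
  shows "a / (P1 * fp) * x ^ p * (b / (Q1 * fq) * (- x) ^ q)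
       = x ^ (p + q) / F * (F / (fp * fq) * (- 1) ^ q * (1 * a / P1) * (b * 1 / Q1))"
proof -
  have core: "a / (P1 * fp) * X * (b / (Q1 * fq) * (S * Y)) = X * Y / F * (F / (fp * fq) * S * (1 * a / P1) * (b * 1 / Q1))"
    for X Y S :: complex
    using assms by (simp add: field_simps)
  have "(- x) ^ q = (-1) ^ q * x ^ q" by (rule power_minus)
  then show ?thesis unfolding power_add by (simp only: core)
qed

lemma cauchy_coeff:
  "(\<Sum>i\<le>k. phi_term (z+1) i \<zeta> * phi_term (-w+1) (k-i) (-\<zeta>))
     = \<zeta>^k / of_nat (fact k) * (\<Sum>p\<le>k. of_nat (k choose p) * (-1)^(k-p) * Fz z 0 p * Fz w (k-p) 0)"
  unfolding sum_distrib_left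
proof (intro sum.cong refl)
  fix p assume p: "p \<in> {..k}"
  define q where "q = k - p"
  have kq: "k = p + q" using p q_def by auto
  have nz: "(of_nat (fact (p + 1)) :: complex) \<noteq> 0" "(of_nat (fact p) :: complex) \<noteq> 0"
    "(of_nat (fact (q + 1)) :: complex) \<noteq> 0" "(of_nat (fact q) :: complex) \<noteq> 0"
    "(of_nat (fact k) :: complex) \<noteq> 0"
    by (simp_all only: of_nat_eq_0_iff) simp_all
  have b: "(of_nat (k choose p) :: complex) = of_nat (fact k) / (of_nat (fact p) * of_nat (fact q))"
    using binomial_fact[of p k] p unfolding q_def by (simp add: of_nat_fact)
  show "phi_term (z + 1) p \<zeta> * phi_term (- w + 1) (k - p) (- \<zeta>) =
         \<zeta> ^ k / of_nat (fact k) * (of_nat (k choose p) * (- 1) ^ (k - p) * Fz z 0 p * Fz w (k - p) 0)"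
    unfolding q_def[symmetric] b unfolding kq phi_term_def Fz_def pochhammer_0 add_0_right add_0_left
    by (rule aux2) (use nz kq in auto)
qed

lemma prod_Phi:
  "Phi (z+1) \<zeta> * Phi (-w+1) (-\<zeta>) = (\<Sum>k. \<zeta>^k / of_nat (fact k) * Sc z w k)"
proof -
  have "Phi (z+1) \<zeta> * Phi (-w+1) (-\<zeta>)
      = (\<Sum>k. \<Sum>i\<le>k. phi_term (z+1) i \<zeta> * phi_term (-w+1) (k-i) (-\<zeta>))"
    unfolding Phi_eq by (rule Cauchy_product[OF phi_summable phi_summable])
  also have "\<dots> = (\<Sum>k. \<zeta>^k / of_nat (fact k) * Sc z w k)"
    unfolding cauchy_coeff Sc_def
    by (subst pascal_main[OF pascal_Fz pascal_Fz]) (rule refl)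
  finally show ?thesis .
qed

lemma aux_cancel:
  fixes t P F fp fq L s a b c d :: complex
  assumes "t \<noteq> 0" "P \<noteq> 0" "F \<noteq> 0" "fp \<noteq> 0" "fq \<noteq> 0" "L \<noteq> 0"
  shows "P / ((L * F) * F) * (s * t * a * b * c * d / ((t * P) * L * fp * fq))
       = 1 / F * (F / (fp * fq) * s * (b * a / (L * F)) * (d * c / (L * F)))"
  using assms by (simp add: field_simps)

lemma moment_coeff:
  assumes t: "\<And>n. pochhammer (z * w) (Suc n) \<noteq> 0"
  shows "pochhammer (z * w + 1) l / (of_nat (fact (l+1)) * of_nat (fact l)) * sigma1_moment z w l
        = 1 / of_nat (fact l) * Sc z w l"
  unfolding sigma1_moment_def Let_def Sc_def sum_distrib_left
proof (intro sum.cong refl)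
  fix p assume p: "p \<in> {..l}"
  define q where "q = l - p"
  define t where "t = z * w"
  have kq: "l = p + q" using p q_def by auto
  have nz: "(of_nat (fact (p + 1)) :: complex) \<noteq> 0" "(of_nat (fact p) :: complex) \<noteq> 0"
    "(of_nat (fact q) :: complex) \<noteq> 0" "(of_nat (fact l) :: complex) \<noteq> 0"
    "(of_nat (fact (l+1)) :: complex) \<noteq> 0" "(of_nat (l+1) :: complex) \<noteq> 0"
    by (simp_all only: of_nat_eq_0_iff) simp_all
  have tp: "pochhammer t (Suc l) = t * pochhammer (t+1) l" by (rule pochhammer_rec)
  have "t * pochhammer (t+1) l \<noteq> 0" using t[of l] tp unfolding t_def by simp
  then have tnz: "t \<noteq> 0" "pochhammer (t+1) l \<noteq> 0" by auto
  have fl: "(of_nat (fact (l+1)) :: complex) = of_nat (l+1) * of_nat (fact l)"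
    by (simp add: algebra_simps)
  have b: "(of_nat (l choose p) :: complex) = of_nat (fact l) / (of_nat (fact p) * of_nat (fact q))"
    using binomial_fact[of p l] p unfolding q_def by (simp add: of_nat_fact)
  have pq: "p + q + 1 = l + 1" using kq by simp
  have tp': "pochhammer t (l + 1) = t * pochhammer (t+1) l" using tp by simp
  show "pochhammer (z * w + 1) l / (of_nat (fact (l + 1)) * of_nat (fact l)) *
         ((- 1) ^ (l - p) * (z * w) * pochhammer (z + 1) p * pochhammer (- z + 1) (l - p) *
          pochhammer (w + 1) p * pochhammer (- w + 1) (l - p) /
          (pochhammer (z * w) (p + (l - p) + 1) * of_nat (p + (l - p) + 1) * of_nat (fact p) *
           of_nat (fact (l - p)))) =
         1 / of_nat (fact l) * (of_nat (l choose p) * (- 1) ^ (l - p) * Fz z (l - p) p * Fz w (l - p) p)"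
    unfolding q_def[symmetric] t_def[symmetric] b Fz_def pq tp' fl
    by (rule aux_cancel[OF tnz(1) tnz(2) nz(4) nz(2) nz(3) nz(6)])
qed



lemma t_pos:
  assumes "admissible z z'"
  shows "Re (z * z') > 0"
  using assms unfolding admissible_def
proof (elim disjE conjE exE)
  assume h: "z' = cnj z" "z \<notin> \<int>"
  then have "z \<noteq> 0" by auto
  then have "(Re z)\<^sup>2 + (Im z)\<^sup>2 > 0"
    by (metis complex_eq_iff zero_complex.simps(1,2) sum_power2_gt_zero_iff)
  then show ?thesis using h(1) by (simp add: complex_mult_cnj)
next
  fix m :: int
  assume r: "z \<in> \<real>" "z' \<in> \<real>" and m: "of_int m < Re z" "Re z < of_int m + 1"
     "of_int m < Re z'" "Re z' < of_int m + 1"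
  have im: "Im z = 0" "Im z' = 0" using r by (auto simp: complex_is_Real_iff)
  have "Re (z * z') = Re z * Re z'" using im by simp
  moreover have "Re z * Re z' > 0"
  proof (cases "m \<ge> 0")
    case True
    then have "Re z > 0" "Re z' > 0" using m by linarith+
    then show ?thesis by simp
  next
    case False
    then have "of_int m + 1 \<le> (0::real)" by linarith
    then have "Re z < 0" "Re z' < 0" using m by linarith+
    then show ?thesis by (simp add: mult_neg_neg)
  qed
  ultimately show ?thesis by linarith
qed

lemma poch_nz:
  assumes "Re t > 0"
  shows "pochhammer t (Suc n) \<noteq> 0"
proof
  assume "pochhammer t (Suc n) = 0"
  then obtain k where "t = - of_nat k" by (auto simp: pochhammer_eq_0_iff)
  then have "Re t = - real k" by simp
  then show False using assms by simp
qed

lemma phi_term_scale: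
  "phi_term a k (\<zeta> * complex_of_real x) = phi_term a k \<zeta> * complex_of_real (x ^ k)"
  unfolding phi_term_def by (simp add: power_mult_distrib)

theorem theorem5p2:
  fixes z z' \<zeta> :: complex and M :: "real measure"
  assumes "admissible z z'"
    and "is_sigma1 z z' M"
  shows "(LINT x|M. Phi (z * z' + 1) (\<zeta> * complex_of_real x))
           = Phi (z + 1) \<zeta> * Phi (- z' + 1) (- \<zeta>)
         \<and> Phi (z + 1) \<zeta> * Phi (- z' + 1) (- \<zeta>)
           = Phi (z' + 1) \<zeta> * Phi (- z + 1) (- \<zeta>)"
proof -
  have sets_eq: "sets M = sets borel" and fin: "finite_measure M"
    and null: "emeasure M (- {-1..1}) = 0"
    and mom: "\<And>l. complex_of_real (integral\<^sup>L M (\<lambda>x. x ^ l)) = sigma1_moment z z' l"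
    using assms(2) unfolding is_sigma1_def by auto
  interpret finite_measure M by (rule fin)
  have mc: "measurable M N = measurable borel N" for N :: "'b measure"
    by (rule measurable_cong_sets[OF sets_eq refl])
  have cset: "- {-1..1::real} \<in> sets M"
    unfolding sets_eq by (intro borel_open open_Compl closed_atLeastAtMost)
  have AE1: "AE x in M. x \<in> {-1..1}"
    by (rule AE_I[OF _ null cset]) auto
  have AEb: "AE x in M. \<bar>x ^ k\<bar> \<le> 1" for k
    using AE1 by eventually_elim (auto simp: abs_le_iff power_abs intro: power_le_one)
  have int_pow: "integrable M (\<lambda>x. x ^ k)" for k
    by (rule integrable_const_bound[where B=1]) (use AEb in \<open>auto simp: mc\<close>)
  have int_abs_pow: "integrable M (\<lambda>x. \<bar>x\<bar> ^ k)" for k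
    by (rule integrable_const_bound[where B=1]) (use AEb in \<open>auto simp: mc power_abs\<close>)
  have int_c_pow: "integrable M (\<lambda>x. complex_of_real (x ^ k))" for k
    by (rule integrable_const_bound[where B=1]) (use AEb[of k] in \<open>auto simp: mc norm_power power_abs\<close>)
  define t where "t = z * z'"
  have tpos: "Re t > 0" unfolding t_def by (rule t_pos[OF assms(1)])
  define f where "f k x = phi_term (t + 1) k \<zeta> * complex_of_real (x ^ k)" for k x
  have Phi_f: "Phi (t + 1) (\<zeta> * complex_of_real x) = (\<Sum>k. f k x)" for x
    unfolding Phi_eq f_def phi_term_scale ..
  have int_f: "integrable M (f k)" for k
    unfolding f_def by (intro integrable_mult_right int_c_pow)
  have summ_f: "AE x in M. summable (\<lambda>k. norm (f k x))"
  proof (rule AE_I2)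
    fix x
    show "summable (\<lambda>k. norm (f k x))"
      using phi_summable[of "t+1" "\<zeta> * complex_of_real x"]
      unfolding f_def phi_term_scale .
  qed
  have intnorm: "(\<integral>x. norm (f k x) \<partial>M) = norm (phi_term (t + 1) k \<zeta>) * (\<integral>x. \<bar>x\<bar> ^ k \<partial>M)" for k
    unfolding f_def norm_mult norm_of_real by (simp add: power_abs)
  have bound: "(\<integral>x. \<bar>x\<bar> ^ k \<partial>M) \<le> measure M (space M)" for k
  proof -
    have "(\<integral>x. \<bar>x\<bar> ^ k \<partial>M) \<le> (\<integral>x. 1 \<partial>M)"
      by (rule integral_mono_AE[OF int_abs_pow]) (use AEb in \<open>auto simp: power_abs\<close>)
    then show ?thesis by simp
  qed
  have nonneg: "(\<integral>x. \<bar>x\<bar> ^ k \<partial>M) \<ge> 0" for k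
    by (rule integral_nonneg_AE) auto
  have summ_int: "summable (\<lambda>k. \<integral>x. norm (f k x) \<partial>M)"
  proof (rule summable_comparison_test[where g="\<lambda>k. norm (phi_term (t + 1) k \<zeta>) * measure M (space M)"])
    show "\<exists>N. \<forall>n\<ge>N. norm (\<integral>x. norm (f n x) \<partial>M) \<le> norm (phi_term (t + 1) n \<zeta>) * measure M (space M)"
    proof (intro exI allI impI)
      fix n
      show "norm (\<integral>x. norm (f n x) \<partial>M) \<le> norm (phi_term (t + 1) n \<zeta>) * measure M (space M)"
        unfolding intnorm using bound[of n] nonneg[of n]
        by (simp add: abs_mult mult_left_mono)
    qed
    show "summable (\<lambda>k. norm (phi_term (t + 1) k \<zeta>) * measure M (space M))"
      by (intro summable_mult2 phi_summable)
  qed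
  have int_fk: "integral\<^sup>L M (f k) = \<zeta> ^ k / of_nat (fact k) * Sc z z' k" for k
  proof -
    have "integral\<^sup>L M (f k) = phi_term (t + 1) k \<zeta> * sigma1_moment z z' k"
      unfolding f_def integral_mult_right_zero integral_complex_of_real mom by (rule refl)
    also have "\<dots> = \<zeta> ^ k * (pochhammer (z * z' + 1) k / (of_nat (fact (k+1)) * of_nat (fact k)) * sigma1_moment z z' k)"
      unfolding phi_term_def t_def by (simp add: mult_ac)
    also have "\<dots> = \<zeta> ^ k / of_nat (fact k) * Sc z z' k"
      using moment_coeff[of z z' k] poch_nz[OF tpos[unfolded t_def]] by simp
    finally show ?thesis .
  qed
  have "(LINT x|M. Phi (z * z' + 1) (\<zeta> * complex_of_real x)) = (\<Sum>k. integral\<^sup>L M (f k))"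
    unfolding t_def[symmetric] Phi_f
    by (rule integral_suminf[OF int_f summ_f summ_int])
  also have "\<dots> = (\<Sum>k. \<zeta> ^ k / of_nat (fact k) * Sc z z' k)"
    unfolding int_fk ..
  also have "\<dots> = Phi (z + 1) \<zeta> * Phi (- z' + 1) (- \<zeta>)"
    by (rule prod_Phi[symmetric])
  finally have A: "(LINT x|M. Phi (z * z' + 1) (\<zeta> * complex_of_real x)) = Phi (z + 1) \<zeta> * Phi (- z' + 1) (- \<zeta>)" .
  have B: "Phi (z + 1) \<zeta> * Phi (- z' + 1) (- \<zeta>) = Phi (z' + 1) \<zeta> * Phi (- z + 1) (- \<zeta>)"
    unfolding prod_Phi by (simp only: Sc_sym)
  show ?thesis using A B by blast
qed

end
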